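(* Let $r,\alpha\in\mathbb R$, $\sigma>0$, and let $d_1<d_2$ be the (assumed real and distinct) roots of $P(d)=\frac{\sigma^2}{2}d^2+(\alpha-\frac{\sigma^2}{2})d-r$. Let $x>0$, $\beta\in\mathbb R$, $a,b>0$, and for $c>0$, $t>0$ put $$H(t;c)=\Phi\left(\frac{1}{\sigma\sqrt t}\ln\left(\frac{c}{x}\right)+\sigma\left(\frac{d_1+d_2}{2}-\beta\right)\sqrt t\right),$$ where $\Phi$ is the standard normal distribution function. Then: 1) if $\beta<d_2$, then $\lim_{t\to\infty}x^\beta e^{P(\beta)t}[1-H(t;a)]=0$; 2) if $\beta>d_1$, then $\lim_{t\to\infty}x^\beta e^{P(\beta)t}H(t;b)=0$; 3) if $\beta=0$, then $\lim_{t\to\infty}x^\beta e^{P(\beta)t}[H(t;b)-H(t;a)]=0$. *)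

theory Defs
  imports "HOL-Probability.Probability"
begin

definition Phi :: "real \<Rightarrow> real" where
  "Phi = cdf (density lborel std_normal_density)"

definition Pq :: "real \<Rightarrow> real \<Rightarrow> real \<Rightarrow> real \<Rightarrow> real" where
  "Pq r \<alpha> \<sigma> d = \<sigma>\<^sup>2 / 2 * d\<^sup>2 + (\<alpha> - \<sigma>\<^sup>2 / 2) * d - r"

definition Hf :: "real \<Rightarrow> real \<Rightarrow> real \<Rightarrow> real \<Rightarrow> real \<Rightarrow> real \<Rightarrow> real \<Rightarrow> real" where
  "Hf \<sigma> d1 d2 \<beta> x t c =
     Phi (1 / (\<sigma> * sqrt t) * ln (c / x) + \<sigma> * ((d1 + d2) / 2 - \<beta>) * sqrt t)"

end

theory Submission
  imports Defs "HOL-Real_Asymp.Real_Asymp"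
begin

lemma pw: assumes "y \<le> 0" "u \<le> y" shows "std_normal_density u \<le> exp(-y\<^sup>2/2) * normal_density y 1 u"
proof -
  have "2*y*(u-y) \<ge> 0" using assms by (simp add: mult_nonpos_nonpos)
  hence "-u\<^sup>2/2 \<le> -y\<^sup>2/2 + -(u-y)\<^sup>2/2" by (simp add: power2_eq_square algebra_simps)
  hence "exp(-u\<^sup>2/2) \<le> exp(-y\<^sup>2/2) * exp(-(u-y)\<^sup>2/2)" by (simp add: exp_add[symmetric])
  thus ?thesis unfolding normal_density_def by (simp add: divide_right_mono)
qed
lemma pw2: assumes "y \<ge> 0" "u \<ge> y" shows "std_normal_density u \<le> exp(-y\<^sup>2/2) * normal_density y 1 u"
proof -
  have "2*y*(u-y) \<ge> 0" using assms by simp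
  hence "-u\<^sup>2/2 \<le> -y\<^sup>2/2 + -(u-y)\<^sup>2/2" by (simp add: power2_eq_square algebra_simps)
  hence "exp(-u\<^sup>2/2) \<le> exp(-y\<^sup>2/2) * exp(-(u-y)\<^sup>2/2)" by (simp add: exp_add[symmetric])
  thus ?thesis unfolding normal_density_def by (simp add: divide_right_mono)
qed
lemma nd1: "(\<integral>\<^sup>+x. ennreal (normal_density m 1 x) \<partial>lborel) = 1"
  using integrable_normal_density[of 1 m] integral_normal_density[of 1 m] by (subst nn_integral_eq_integral) auto
lemma tail_gen: assumes "\<And>u. u \<in> S \<Longrightarrow> std_normal_density u \<le> exp(-y\<^sup>2/2) * normal_density y 1 u"
  and "S \<in> sets borel"
  shows "measure (density lborel std_normal_density) S \<le> exp(-y\<^sup>2/2)"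
proof -
  have "emeasure (density lborel std_normal_density) S = (\<integral>\<^sup>+x. ennreal (std_normal_density x) * indicator S x \<partial>lborel)"
    using assms(2) by (simp add: emeasure_density)
  also have "\<dots> \<le> (\<integral>\<^sup>+x. ennreal (exp(-y\<^sup>2/2)) * ennreal (normal_density y 1 x) \<partial>lborel)"
    apply (rule nn_integral_mono)
    using assms(1) by (auto simp: indicator_def ennreal_mult'[symmetric])
  also have "\<dots> = ennreal (exp(-y\<^sup>2/2))"
    by (simp add: nn_integral_cmult nd1)
  finally show ?thesis
    by (simp add: measure_def enn2real_leI)
qed
lemma Phi_lower: "y \<le> 0 \<Longrightarrow> Phi y \<le> exp(-y\<^sup>2/2)"
  unfolding Phi_def cdf_def apply (rule tail_gen) apply (rule pw) by auto
interpretation N: prob_space "density lborel std_normal_density" using prob_space_normal_density[of 1 0] by simp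
lemma Phi_upper: "y \<ge> 0 \<Longrightarrow> 1 - Phi y \<le> exp(-y\<^sup>2/2)"
proof -
  assume y: "y \<ge> 0"
  have "1 - Phi y = N.prob (space (density lborel std_normal_density) - {..y})"
    unfolding Phi_def cdf_def by (subst N.prob_compl) auto
  also have "space (density lborel std_normal_density) - {..y} = {y<..}" by auto
  also have "N.prob {y<..} \<le> exp(-y\<^sup>2/2)" apply (rule tail_gen) apply (rule pw2) using y by auto
  finally show ?thesis .
qed
lemma Phi_nonneg: "0 \<le> Phi y" unfolding Phi_def cdf_def by simp
lemma Phi_le1: "Phi y \<le> 1" unfolding Phi_def cdf_def by simp

lemma Glim:
  fixes \<sigma> A \<kappa> P C L :: real and g :: "real \<Rightarrow> real"
  assumes "\<sigma> > 0" "A > 0" "\<kappa> > 0" "P \<le> A\<^sup>2/2 - \<kappa>" "C \<ge> 0"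
    and g0: "\<And>t. 0 \<le> g t"
    and gb: "\<And>t. t > 0 \<Longrightarrow> 0 \<le> 1/(\<sigma>* sqrt t)*L + A* sqrt t \<Longrightarrow> g t \<le> exp(-(1/(\<sigma>* sqrt t)*L + A* sqrt t)\<^sup>2/2)"
  shows "((\<lambda>t. C * exp(P*t) * g t) \<longlongrightarrow> 0) at_top"
proof (rule tendsto_sandwich[where f="\<lambda>_. 0" and h="\<lambda>t. C * exp(-\<kappa>*t - A*L/\<sigma>)"])
  show "\<forall>\<^sub>F t in at_top. 0 \<le> C * exp(P*t) * g t" using g0 assms(5) by simp
  show "((\<lambda>_. 0::real) \<longlongrightarrow> 0) at_top" by simp
  have "((\<lambda>t. exp(-\<kappa>*t - A*L/\<sigma>)) \<longlongrightarrow> 0) at_top"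
  proof -
    have "filterlim (\<lambda>t. -\<kappa>*t - A*L/\<sigma>) at_bot at_top"
      using assms(3) by real_asymp
    thus ?thesis by (rule filterlim_compose[OF exp_at_bot])
  qed
  from tendsto_mult[OF tendsto_const[of C] this]
  show "((\<lambda>t. C * exp(-\<kappa>*t - A*L/\<sigma>)) \<longlongrightarrow> 0) at_top" by simp
  show "\<forall>\<^sub>F t in at_top. C * exp(P*t) * g t \<le> C * exp(-\<kappa>*t - A*L/\<sigma>)"
    using eventually_ge_at_top[of "max 1 (\<bar>L\<bar>/(\<sigma>*A))"]
  proof eventually_elim
    case (elim t)
    have t: "t \<ge> 1" "t \<ge> \<bar>L\<bar>/(\<sigma>*A)" using elim by auto
    hence tp: "t > 0" by simp
    define s where "s = sqrt t"
    have sp: "s > 0" using tp s_def by simp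
    have ss: "s* s = t" using tp s_def by (simp add: real_sqrt_mult_self)
    define z where "z = 1/(\<sigma>* s)*L + A* s"
    have zs: "z * s = L/\<sigma> + A*t" using sp ss assms(1) unfolding z_def by (simp add: field_simps)
    have "\<bar>L\<bar> \<le> \<sigma>*A*t" using t(2) assms(1,2) by (simp add: field_simps)
    hence "L/\<sigma> + A*t \<ge> 0" using assms(1) by (simp add: field_simps)
    hence z0: "z \<ge> 0" using zs sp by (metis zero_le_mult_iff not_le less_le_not_le)
    have eq: "z\<^sup>2 * t = (L/\<sigma>)\<^sup>2 + 2*A*L/\<sigma>*t + A\<^sup>2*t*t"
    proof -
      have "z\<^sup>2 * t = (z * s)\<^sup>2" using ss by (simp add: power2_eq_square algebra_simps)
      also have "\<dots> = (L/\<sigma>)\<^sup>2 + 2*A*L/\<sigma>*t + A\<^sup>2*t*t" unfolding zs by (simp add: power2_eq_square algebra_simps)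
      finally show ?thesis .
    qed
    have "(2*A*L/\<sigma> + A\<^sup>2*t)*t \<le> z\<^sup>2*t" unfolding eq by (simp add: algebra_simps)
    hence zb: "z\<^sup>2 \<ge> 2*A*L/\<sigma> + A\<^sup>2*t" using tp by simp
    have "g t \<le> exp(-z\<^sup>2/2)" using gb[OF tp] z0 unfolding z_def s_def by simp
    hence "exp(P*t) * g t \<le> exp(P*t) * exp(-z\<^sup>2/2)" by simp
    also have "\<dots> = exp(P*t + -z\<^sup>2/2)" by (simp only: exp_add)
    also have "\<dots> \<le> exp(-\<kappa>*t - A*L/\<sigma>)"
    proof -
      have "P*t \<le> (A\<^sup>2/2 - \<kappa>)*t" using assms(4) tp by (simp add: mult_right_mono)
      thus ?thesis using zb by (simp add: algebra_simps)
    qed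
    finally show ?case using assms(5) by (simp add: mult_left_mono mult.assoc)
  qed
qed

lemma Blim:
  fixes P C :: real and g :: "real \<Rightarrow> real"
  assumes "P < 0" and "\<And>t. \<bar>g t\<bar> \<le> 1"
  shows "((\<lambda>t. C * exp(P*t) * g t) \<longlongrightarrow> 0) at_top"
proof (rule Lim_null_comparison[where g="\<lambda>t. \<bar>C\<bar> * exp(P*t)"])
  show "\<forall>\<^sub>F t in at_top. norm (C * exp(P*t) * g t) \<le> \<bar>C\<bar> * exp(P*t)"
    apply (intro always_eventually allI) using assms(2)
    by (simp add: abs_mult) (metis mult_left_le abs_ge_zero exp_ge_zero mult_nonneg_nonneg)
  show "((\<lambda>t. \<bar>C\<bar> * exp(P*t)) \<longlongrightarrow> 0) at_top" using assms(1) by real_asymp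
qed

lemma Phi_diff: "\<bar>Phi u - Phi v\<bar> \<le> 1"
  using Phi_le1[of u] Phi_nonneg[of v] Phi_le1[of v] Phi_nonneg[of u] by linarith

lemma Pq_fact:
  assumes "\<sigma> > 0" "Pq r \<alpha> \<sigma> d1 = 0" "Pq r \<alpha> \<sigma> d2 = 0" "d1 < d2"
  shows "Pq r \<alpha> \<sigma> \<beta> = \<sigma>\<^sup>2/2 * (\<beta> - d1) * (\<beta> - d2)"
proof -
  have "0 = Pq r \<alpha> \<sigma> d1 - Pq r \<alpha> \<sigma> d2" using assms by simp
  also have "\<dots> = (d1 - d2) * (\<sigma>\<^sup>2/2*(d1+d2) + (\<alpha> - \<sigma>\<^sup>2/2))"
    unfolding Pq_def by (simp add: power2_eq_square field_simps)
  finally have a: "\<alpha> - \<sigma>\<^sup>2/2 = - \<sigma>\<^sup>2/2*(d1+d2)" using assms(4) by simp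
  have "r = \<sigma>\<^sup>2 / 2 * d1\<^sup>2 + (\<alpha> - \<sigma>\<^sup>2 / 2) * d1" using assms(2) unfolding Pq_def by simp
  hence "r = - \<sigma>\<^sup>2/2 * d1 * d2" unfolding a by (simp add: power2_eq_square field_simps)
  thus ?thesis unfolding Pq_def a by (simp add: power2_eq_square algebra_simps)
qed

lemma part1:
  fixes r \<alpha> \<sigma> d1 d2 x \<beta> c :: real
  assumes "\<sigma> > 0"
    and "Pq r \<alpha> \<sigma> d1 = 0" and "Pq r \<alpha> \<sigma> d2 = 0" and "d1 < d2"
    and "x > 0" and "c > 0" and "\<beta> < d2"
  shows "((\<lambda>t. x powr \<beta> * exp (Pq r \<alpha> \<sigma> \<beta> * t) * (1 - Hf \<sigma> d1 d2 \<beta> x t c)) \<longlongrightarrow> 0) at_top"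
proof (cases "\<beta> \<le> d1")
  case True
  have P: "Pq r \<alpha> \<sigma> \<beta> = \<sigma>\<^sup>2/2 * (\<beta> - d1) * (\<beta> - d2)" by (rule Pq_fact[OF assms(1-4)])
  show ?thesis
  proof (rule Glim[where A="\<sigma> * ((d1 + d2) / 2 - \<beta>)" and \<kappa>="\<sigma>\<^sup>2 * ((d2 - d1)/2)\<^sup>2/2" and \<sigma>=\<sigma> and L="ln (c / x)"])
    show "\<sigma> > 0" by fact
    show "\<sigma> * ((d1 + d2) / 2 - \<beta>) > 0" using True assms by simp
    show "\<sigma>\<^sup>2 * ((d2 - d1)/2)\<^sup>2/2 > 0" using assms by simp
    show "Pq r \<alpha> \<sigma> \<beta> \<le> (\<sigma> * ((d1 + d2) / 2 - \<beta>))\<^sup>2/2 - \<sigma>\<^sup>2 * ((d2 - d1)/2)\<^sup>2/2"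
      unfolding P by (simp add: power2_eq_square field_simps)
    show "x powr \<beta> \<ge> 0" by simp
    show "\<And>t. 0 \<le> 1 - Hf \<sigma> d1 d2 \<beta> x t c" unfolding Hf_def using Phi_le1 by simp
    show "\<And>t. t > 0 \<Longrightarrow> 0 \<le> 1/(\<sigma> * sqrt t)*ln (c / x) + \<sigma> * ((d1 + d2) / 2 - \<beta>) * sqrt t \<Longrightarrow>
       1 - Hf \<sigma> d1 d2 \<beta> x t c \<le> exp(-(1/(\<sigma> * sqrt t)*ln (c / x) + \<sigma> * ((d1 + d2) / 2 - \<beta>) * sqrt t)\<^sup>2/2)"
      unfolding Hf_def by (rule Phi_upper)
  qed
next
  case False
  have "Pq r \<alpha> \<sigma> \<beta> < 0" unfolding Pq_fact[OF assms(1-4)] using False assms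
    by (simp add: mult_pos_neg)
  thus ?thesis
    by (rule Blim) (use Phi_le1 Phi_nonneg in \<open>simp add: Hf_def abs_le_iff\<close>)
qed

lemma part2:
  fixes r \<alpha> \<sigma> d1 d2 x \<beta> c :: real
  assumes "\<sigma> > 0"
    and "Pq r \<alpha> \<sigma> d1 = 0" and "Pq r \<alpha> \<sigma> d2 = 0" and "d1 < d2"
    and "x > 0" and "c > 0" and "\<beta> > d1"
  shows "((\<lambda>t. x powr \<beta> * exp (Pq r \<alpha> \<sigma> \<beta> * t) * Hf \<sigma> d1 d2 \<beta> x t c) \<longlongrightarrow> 0) at_top"
proof (cases "\<beta> \<ge> d2")
  case True
  have P: "Pq r \<alpha> \<sigma> \<beta> = \<sigma>\<^sup>2/2 * (\<beta> - d1) * (\<beta> - d2)" by (rule Pq_fact[OF assms(1-4)])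
  show ?thesis
  proof (rule Glim[where A="\<sigma> * (\<beta> - (d1 + d2) / 2)" and \<kappa>="\<sigma>\<^sup>2 * ((d2 - d1)/2)\<^sup>2/2" and \<sigma>=\<sigma> and L="- ln (c / x)"])
    show "\<sigma> > 0" by fact
    show "\<sigma> * (\<beta> - (d1 + d2) / 2) > 0" using True assms by simp
    show "\<sigma>\<^sup>2 * ((d2 - d1)/2)\<^sup>2/2 > 0" using assms by simp
    show "Pq r \<alpha> \<sigma> \<beta> \<le> (\<sigma> * (\<beta> - (d1 + d2) / 2))\<^sup>2/2 - \<sigma>\<^sup>2 * ((d2 - d1)/2)\<^sup>2/2"
      unfolding P by (simp add: power2_eq_square field_simps)
    show "x powr \<beta> \<ge> 0" by simp
    show "\<And>t. 0 \<le> Hf \<sigma> d1 d2 \<beta> x t c" unfolding Hf_def using Phi_nonneg by simp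
    fix t :: real
    assume "t > 0" and z: "0 \<le> 1/(\<sigma> * sqrt t)*(- ln (c / x)) + \<sigma> * (\<beta> - (d1 + d2) / 2) * sqrt t"
    have e: "1/(\<sigma> * sqrt t)*(- ln (c / x)) + \<sigma> * (\<beta> - (d1 + d2) / 2) * sqrt t
       = - (1 / (\<sigma> * sqrt t) * ln (c / x) + \<sigma> * ((d1 + d2) / 2 - \<beta>) * sqrt t)"
      by (simp add: algebra_simps)
    show "Hf \<sigma> d1 d2 \<beta> x t c \<le> exp(-(1/(\<sigma> * sqrt t)*(- ln (c / x)) + \<sigma> * (\<beta> - (d1 + d2) / 2) * sqrt t)\<^sup>2/2)"
      unfolding e Hf_def power2_minus
      by (rule Phi_lower) (use z e in simp)
  qed
next
  case False
  have "Pq r \<alpha> \<sigma> \<beta> < 0" unfolding Pq_fact[OF assms(1-4)] using False assms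
    by (simp add: mult_pos_neg)
  thus ?thesis
    by (rule Blim) (use Phi_le1 Phi_nonneg in \<open>simp add: Hf_def abs_le_iff\<close>)
qed

theorem lemma2:
  fixes r \<alpha> \<sigma> d1 d2 x \<beta> a b :: real
  assumes "\<sigma> > 0"
    and "Pq r \<alpha> \<sigma> d1 = 0" and "Pq r \<alpha> \<sigma> d2 = 0" and "d1 < d2"
    and "x > 0" and "a > 0" and "b > 0"
  shows "(\<beta> < d2 \<longrightarrow>
           ((\<lambda>t. x powr \<beta> * exp (Pq r \<alpha> \<sigma> \<beta> * t) * (1 - Hf \<sigma> d1 d2 \<beta> x t a))
              \<longlongrightarrow> 0) at_top)
       \<and> (\<beta> > d1 \<longrightarrow>
           ((\<lambda>t. x powr \<beta> * exp (Pq r \<alpha> \<sigma> \<beta> * t) * Hf \<sigma> d1 d2 \<beta> x t b)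
              \<longlongrightarrow> 0) at_top)
       \<and> (\<beta> = 0 \<longrightarrow>
           ((\<lambda>t. x powr \<beta> * exp (Pq r \<alpha> \<sigma> \<beta> * t) * (Hf \<sigma> d1 d2 \<beta> x t b - Hf \<sigma> d1 d2 \<beta> x t a))
              \<longlongrightarrow> 0) at_top)"
proof (intro conjI impI)
  assume "\<beta> < d2" thus "((\<lambda>t. x powr \<beta> * exp (Pq r \<alpha> \<sigma> \<beta> * t) * (1 - Hf \<sigma> d1 d2 \<beta> x t a)) \<longlongrightarrow> 0) at_top"
    using part1 assms by blast
next
  assume "\<beta> > d1" thus "((\<lambda>t. x powr \<beta> * exp (Pq r \<alpha> \<sigma> \<beta> * t) * Hf \<sigma> d1 d2 \<beta> x t b) \<longlongrightarrow> 0) at_top"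
    using part2 assms by blast
next
  assume "\<beta> = 0"
  consider "\<beta> < d2" "\<beta> > d1" | "\<beta> \<le> d1" | "\<beta> \<ge> d2" by linarith
  thus "((\<lambda>t. x powr \<beta> * exp (Pq r \<alpha> \<sigma> \<beta> * t) * (Hf \<sigma> d1 d2 \<beta> x t b - Hf \<sigma> d1 d2 \<beta> x t a)) \<longlongrightarrow> 0) at_top"
  proof cases
    case 1
    have "Pq r \<alpha> \<sigma> \<beta> < 0" unfolding Pq_fact[OF assms(1-4)] using 1 assms
      by (simp add: mult_pos_neg)
    thus ?thesis
      by (rule Blim) (simp add: Hf_def Phi_diff)
  next
    case 2
    hence "\<beta> < d2" using assms by simp
    from tendsto_diff[OF part1[OF assms(1-5) assms(6) this] part1[OF assms(1-5) assms(7) this]]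
    show ?thesis by (simp add: algebra_simps)
  next
    case 3
    hence "\<beta> > d1" using assms by simp
    from tendsto_diff[OF part2[OF assms(1-5) assms(7) this] part2[OF assms(1-5) assms(6) this]]
    show ?thesis by (simp add: algebra_simps)
  qed
qed

end
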